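(* Let $X$ be a topological space and let $(x_n)_{n\in\omega}$ be a sequence of pairwise distinct points of $X$ such that the subspace $\{x_n : n\in\omega\}$ is homeomorphic to $\mathbb{Q}$. Fix a metric $d$ on $\{x_n:n\in\omega\}$ compatible with its subspace topology. Call $A\subseteq\omega$ scattered if there is no $B\subseteq A$ such that the subspace $\{x_n:n\in B\}$ is homeomorphic to $\mathbb{Q}$; let $\mathcal{I}$ be the family of scattered subsets of $\omega$ and $\mathcal{I}^+=\mathcal{P}(\omega)\setminus\mathcal{I}$. For $i,j\in\omega$ let $A_{i,j}=\{n\in\omega : d(x_n,x_i)<\frac{1}{j+1}\}$. Then: (1) for every $A\subseteq\omega$, $A\in\mathcal{I}^+$ if and only if there exists a nonempty $B\subseteq A$ such that for all $i\in B$ and all $j\in\omega$ there is $n\in B\cap A_{i,j}$ with $n\neq i$; (2) for every $A\in\mathcal{I}^+$ there exists $B\subseteq A$ with $B\in\mathcal{I}^+$ such that $B\cap A_{i,j}\in\mathcal{I}^+$ for all $i\in B$ and all $j\in\omega$.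
   Context: $\omega$ denotes the set of natural numbers and $\mathcal{P}(\omega)$ its power set. $\mathbb{Q}$ carries its usual topology. *)

theory Defs
  imports "HOL-Analysis.Analysis"
begin

definition scattered_idx :: "'a topology \<Rightarrow> (nat \<Rightarrow> 'a) \<Rightarrow> nat set \<Rightarrow> bool" where
  "scattered_idx X x A \<longleftrightarrow>
     \<not> (\<exists>B\<subseteq>A. subtopology X (x ` B) homeomorphic_space top_of_set (\<rat> :: real set))"

definition scat_ideal :: "'a topology \<Rightarrow> (nat \<Rightarrow> 'a) \<Rightarrow> nat set set" where
  "scat_ideal X x = {A. scattered_idx X x A}"

definition scat_plus :: "'a topology \<Rightarrow> (nat \<Rightarrow> 'a) \<Rightarrow> nat set set" where
  "scat_plus X x = Pow UNIV - scat_ideal X x"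

definition ballA :: "('a \<Rightarrow> 'a \<Rightarrow> real) \<Rightarrow> (nat \<Rightarrow> 'a) \<Rightarrow> nat \<Rightarrow> nat \<Rightarrow> nat set" where
  "ballA d x i j = {n. d (x n) (x i) < 1 / (real j + 1)}"

end

theory Submission
  imports Defs "HOL-Library.Nat_Bijection"
begin


definition xi :: real where "xi = (SOME t. t \<notin> \<rat>)"

lemma xi_irr: "xi \<notin> \<rat>"
proof -
  have "\<exists>t::real. t \<notin> \<rat>"
    using countable_rat uncountable_UNIV_real by (metis UNIV_eq_I)
  then show ?thesis unfolding xi_def by (rule someI_ex)
qed

definition Lq :: "nat \<Rightarrow> real \<Rightarrow> int" where
  "Lq n q = \<lfloor>(q - xi) * 2^n\<rfloor>"

fun qpath :: "real \<Rightarrow> nat \<Rightarrow> int list" where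
  "qpath q 0 = []"
| "qpath q (Suc n) = Lq n q # qpath q n"

lemma length_qpath [simp]: "length (qpath q n) = n"
  by (induction n) auto

lemma Lq_close:
  assumes "Lq n a = Lq n b" shows "\<bar>a - b\<bar> < 1 / 2^n"
proof -
  let ?A = "(a - xi) * 2^n" and ?B = "(b - xi) * 2^n"
  have "\<lfloor>?A\<rfloor> = \<lfloor>?B\<rfloor>" using assms by (simp add: Lq_def)
  then have "\<bar>?A - ?B\<bar> < 1"
    by linarith
  moreover have "?A - ?B = (a - b) * 2^n" by (simp add: algebra_simps)
  ultimately have "\<bar>a - b\<bar> * 2^n < 1" by (simp add: abs_mult)
  then show ?thesis by (simp add: field_simps)
qed

lemma qpath_Lq: "j < n \<Longrightarrow> qpath a n = qpath b n \<Longrightarrow> Lq j a = Lq j b"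
proof (induction n)
  case 0 then show ?case by simp
next
  case (Suc n) then show ?case by (cases "j = n") auto
qed

lemma not_int_shift:
  assumes "q \<in> \<rat>" shows "(q - xi) * 2^n \<noteq> of_int m"
proof
  assume "(q - xi) * 2^n = of_int m"
  then have "xi = q - of_int m / 2^n" by (simp add: field_simps)
  moreover have "q - of_int m / 2^n \<in> \<rat>" using assms by simp
  ultimately show False using xi_irr by simp
qed

lemma Lq_stable:
  assumes "q \<in> \<rat>" shows "\<exists>\<delta>>0. \<forall>q'. \<bar>q' - q\<bar> < \<delta> \<longrightarrow> Lq n q' = Lq n q"
proof -
  define a where "a = (q - xi) * 2^n"
  define fl where "fl = (of_int \<lfloor>a\<rfloor> :: real)"
  have ne: "a \<noteq> fl" unfolding fl_def a_def by (rule not_int_shift[OF assms])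
  have "fl \<le> a" unfolding fl_def by (rule of_int_floor_le)
  with ne have lo: "fl < a" by simp
  have hi: "a < fl + 1" unfolding fl_def by (rule real_of_int_floor_add_one_gt)
  define m where "m = min (a - fl) (fl + 1 - a)"
  have m1: "m \<le> a - fl" and m2: "m \<le> fl + 1 - a" unfolding m_def by simp_all
  have mpos: "m > 0" using lo hi unfolding m_def by simp
  define \<delta> where "\<delta> = m / 2^n"
  have "\<delta> > 0" using mpos by (simp add: \<delta>_def)
  moreover have "Lq n q' = Lq n q" if "\<bar>q' - q\<bar> < \<delta>" for q'
  proof -
    define t where "t = (q' - q) * 2^n"
    have "\<bar>q' - q\<bar> * 2^n < m"
      using that by (simp add: \<delta>_def pos_less_divide_eq)
    moreover have "\<bar>t\<bar> = \<bar>q' - q\<bar> * 2^n" by (simp add: t_def abs_mult)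
    ultimately have tb: "\<bar>t\<bar> < m" by simp
    have eq: "(q' - xi) * 2^n = a + t" by (simp add: a_def t_def algebra_simps)
    have "fl \<le> a + t \<and> a + t < fl + 1"
      using tb m1 m2 abs_ge_self[of t] abs_ge_minus_self[of t] by linarith
    then have "\<lfloor>a + t\<rfloor> = \<lfloor>a\<rfloor>" unfolding fl_def by (simp add: floor_eq_iff)
    then show ?thesis by (simp add: Lq_def a_def[symmetric] eq)
  qed
  ultimately show ?thesis by blast
qed

lemma qpath_stable:
  assumes "q \<in> \<rat>" shows "\<exists>\<delta>>0. \<forall>q'. \<bar>q' - q\<bar> < \<delta> \<longrightarrow> qpath q' n = qpath q n"
proof (induction n)
  case 0 show ?case by (rule exI[of _ 1]) simp
next
  case (Suc n)
  then obtain d1 where d1: "d1 > 0" "\<forall>q'. \<bar>q' - q\<bar> < d1 \<longrightarrow> qpath q' n = qpath q n" by blast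
  obtain d2 where d2: "d2 > 0" "\<forall>q'. \<bar>q' - q\<bar> < d2 \<longrightarrow> Lq n q' = Lq n q"
    using Lq_stable[OF assms] by blast
  show ?case
  proof (intro exI[of _ "min d1 d2"] conjI allI impI)
    show "0 < min d1 d2" using d1 d2 by simp
    fix q' assume "\<bar>q' - q\<bar> < min d1 d2"
    then have "\<bar>q' - q\<bar> < d1" "\<bar>q' - q\<bar> < d2" by simp_all
    then have "qpath q' n = qpath q n" "Lq n q' = Lq n q" using d1(2) d2(2) by blast+
    then show "qpath q' (Suc n) = qpath q (Suc n)" by simp
  qed
qed

definition enum :: "nat \<Rightarrow> real" where "enum = from_nat_into \<rat>"

lemma enum_bij: "bij_betw enum UNIV \<rat>"
  unfolding enum_def by (rule bij_betw_from_nat_into[OF countable_rat Rats_infinite])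

definition mQ :: "int list \<Rightarrow> real" where
  "mQ s = enum (LEAST k. qpath (enum k) (length s) = s)"

definition dl :: "int list \<Rightarrow> int" where
  "dl s = Lq (length s) (mQ s)"

lemma eventually_sep:
  assumes "a \<noteq> b" shows "eventually (\<lambda>n. qpath a n \<noteq> qpath b n) sequentially"
proof -
  obtain n0 where "(1/2::real)^n0 < \<bar>a - b\<bar>"
    using real_arch_pow_inv[of "\<bar>a - b\<bar>" "1/2"] assms by auto
  then have n0: "1 / 2^n0 < \<bar>a - b\<bar>" by (simp add: power_one_over)
  show ?thesis unfolding eventually_sequentially
  proof (intro exI[of _ "Suc n0"] allI impI)
    fix n assume "Suc n0 \<le> n"
    show "qpath a n \<noteq> qpath b n"
    proof
      assume "qpath a n = qpath b n"
      then have "Lq n0 a = Lq n0 b" using qpath_Lq[of n0 n a b] \<open>Suc n0 \<le> n\<close> by simp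
      then show False using Lq_close n0 by fastforce
    qed
  qed
qed

lemma mQ_stable:
  assumes "q \<in> \<rat>" shows "eventually (\<lambda>n. mQ (qpath q n) = q) sequentially"
proof -
  obtain k where k: "enum k = q" using enum_bij assms by (metis bij_betw_iff_bijections)
  have inj: "inj enum" using enum_bij bij_betw_imp_inj_on by blast
  have "eventually (\<lambda>n. \<forall>i\<in>{..<k}. qpath (enum i) n \<noteq> qpath q n) sequentially"
  proof (rule eventually_ball_finite)
    show "\<forall>i\<in>{..<k}. eventually (\<lambda>n. qpath (enum i) n \<noteq> qpath q n) sequentially"
    proof
      fix i assume "i \<in> {..<k}"
      then have "enum i \<noteq> q" using inj k by (metis lessThan_iff less_irrefl injD)
      then show "eventually (\<lambda>n. qpath (enum i) n \<noteq> qpath q n) sequentially"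
        by (rule eventually_sep)
    qed
  qed simp
  then show ?thesis
  proof (rule eventually_mono)
    fix n assume H: "\<forall>i\<in>{..<k}. qpath (enum i) n \<noteq> qpath q n"
    have "(LEAST k'. qpath (enum k') n = qpath q n) = k"
    proof (rule Least_equality)
      show "qpath (enum k) n = qpath q n" using k by simp
      fix y assume "qpath (enum y) n = qpath q n"
      then show "k \<le> y" using H by (meson lessThan_iff not_le)
    qed
    then show "mQ (qpath q n) = q" by (simp add: mQ_def k)
  qed
qed



locale perfset = Metric_space M d for M :: "'a set" and d +
  fixes P :: "'a set" and p0 :: 'a
  assumes PM: "P \<subseteq> M" and p0: "p0 \<in> P"
    and perf: "\<And>p e. p \<in> P \<Longrightarrow> e > 0 \<Longrightarrow> \<exists>q\<in>P. q \<noteq> p \<and> d q p < e"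
begin

definition childP :: "(nat \<Rightarrow> 'a \<times> real) \<Rightarrow> 'a \<Rightarrow> real \<Rightarrow> bool" where
  "childP C p r \<longleftrightarrow> fst (C 0) = p \<and>
     (\<forall>k. fst (C k) \<in> P \<and> 0 < snd (C k) \<and> snd (C k) \<le> r/2 \<and> mball (fst (C k)) (snd (C k)) \<subseteq> mball p r) \<and>
     (\<forall>k k'. k \<noteq> k' \<longrightarrow> mball (fst (C k)) (snd (C k)) \<inter> mball (fst (C k')) (snd (C k')) = {})"

lemma children_exist:
  assumes pP: "p \<in> P" and r: "r > 0" shows "\<exists>C. childP C p r"
proof -
  obtain y where y: "y \<in> P" "y \<noteq> p" "d y p < r/2" using perf[OF pP, of "r/2"] r by auto
  have yM: "y \<in> M" and pM: "p \<in> M" using y pP PM by auto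
  define a where "a = d y p"
  have apos: "a > 0" using y yM pM a_def by simp
  have ar: "a < r/2" using y a_def by simp
  define z where "z = rec_nat (SOME q. q \<in> P \<and> q \<noteq> y \<and> d q y < a/3)
      (\<lambda>k zk. SOME q. q \<in> P \<and> q \<noteq> y \<and> d q y < d zk y / 3)"
  have z0: "z 0 = (SOME q. q \<in> P \<and> q \<noteq> y \<and> d q y < a/3)" by (simp add: z_def)
  have zS: "z (Suc k) = (SOME q. q \<in> P \<and> q \<noteq> y \<and> d q y < d (z k) y / 3)" for k by (simp add: z_def)
  have zgood: "z k \<in> P \<and> z k \<noteq> y \<and> d (z k) y < a/3" for k
  proof (induction k)
    case 0
    have "\<exists>q. q \<in> P \<and> q \<noteq> y \<and> d q y < a/3" using perf[OF y(1), of "a/3"] apos by auto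
    then show ?case unfolding z0 by (rule someI_ex)
  next
    case (Suc k)
    have zM: "z k \<in> M" using Suc PM by auto
    have pos: "d (z k) y > 0" using Suc zM yM by simp
    have "\<exists>q. q \<in> P \<and> q \<noteq> y \<and> d q y < d (z k) y / 3" using perf[OF y(1), of "d (z k) y / 3"] pos by auto
    then have "z (Suc k) \<in> P \<and> z (Suc k) \<noteq> y \<and> d (z (Suc k)) y < d (z k) y / 3" unfolding zS by (rule someI_ex)
    moreover have "d (z (Suc k)) y < a/3" using calculation Suc nonneg[of "z k" y] by linarith
    ultimately show ?case by blast
  qed
  have zdec: "d (z (Suc k)) y < d (z k) y / 3" for k
  proof -
    have zM: "z k \<in> M" using zgood PM by auto
    have pos: "d (z k) y > 0" using zgood zM yM by simp
    have "\<exists>q. q \<in> P \<and> q \<noteq> y \<and> d q y < d (z k) y / 3" using perf[OF y(1), of "d (z k) y / 3"] pos by auto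
    then have "z (Suc k) \<in> P \<and> z (Suc k) \<noteq> y \<and> d (z (Suc k)) y < d (z k) y / 3" unfolding zS by (rule someI_ex)
    then show ?thesis by simp
  qed
  define t where "t k = d (z k) y" for k
  have zM: "z k \<in> M" for k using zgood PM by auto
  have tpos: "t k > 0" for k using zgood zM yM t_def by simp
  have tdec: "t k' \<le> t (Suc k)" if "Suc k \<le> k'" for k k'
    using that
  proof (induction k' rule: dec_induct)
    case base then show ?case by simp
  next
    case (step m) then show ?case using zdec[of m] tpos[of m] unfolding t_def by linarith
  qed
  have tlt: "t k' < t k / 3" if "k < k'" for k k'
    using tdec[of k k'] that zdec[of k] unfolding t_def by simp
  define C where "C k = (case k of 0 \<Rightarrow> (p, a/3) | Suc k \<Rightarrow> (z k, t k / 3))" for k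
  have C0: "C 0 = (p, a/3)" and CS: "C (Suc k) = (z k, t k / 3)" for k by (simp_all add: C_def)
  have ta: "t k < a/3" for k using zgood t_def by simp
  have "childP C p r"
    unfolding childP_def
  proof (intro conjI allI impI)
    show "fst (C 0) = p" by (simp add: C0)
    fix k
    show "fst (C k) \<in> P" using pP zgood by (cases k) (simp_all add: C0 CS)
    show "0 < snd (C k)" using apos tpos by (cases k) (simp_all add: C0 CS)
    show "snd (C k) \<le> r/2" using ar ta apos by (cases k) (simp_all add: C0 CS, smt (verit, best) tpos)
    show "mball (fst (C k)) (snd (C k)) \<subseteq> mball p r"
    proof (cases k)
      case 0 then show ?thesis using ar apos by (auto simp: C0)
    next
      case (Suc j)
      show ?thesis
      proof
        fix u assume "u \<in> mball (fst (C k)) (snd (C k))"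
        then have uM: "u \<in> M" and du: "d (z j) u < t j / 3" by (auto simp: Suc CS)
        have "d p u \<le> d p y + d y u" using triangle pM yM uM by blast
        moreover have "d y u \<le> d y (z j) + d (z j) u" using triangle yM zM uM by blast
        moreover have "d p y = a" "d y (z j) = t j" using commute a_def t_def by auto
        ultimately have "d p u < r" using du ta[of j] ar apos r by linarith
        then show "u \<in> mball p r" using pM uM by simp
      qed
    qed
  next
    fix k k' :: nat assume kk: "k \<noteq> k'"
    have disj0: "mball p (a/3) \<inter> mball (z j) (t j / 3) = {}" for j
    proof (rule ccontr)
      assume "mball p (a/3) \<inter> mball (z j) (t j / 3) \<noteq> {}"
      then obtain u where u: "u \<in> M" "d p u < a/3" "d (z j) u < t j / 3" by auto
      have "d y p \<le> d y (z j) + d (z j) p" using triangle yM zM pM by blast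
      moreover have "d (z j) p \<le> d (z j) u + d u p" using triangle zM u(1) pM by blast
      moreover have "d y (z j) = t j" "d u p = d p u" using commute t_def by auto
      ultimately show False using u ta[of j] a_def apos by linarith
    qed
    have disjS: "mball (z j) (t j / 3) \<inter> mball (z j') (t j' / 3) = {}" if "j < j'" for j j'
    proof (rule ccontr)
      assume "mball (z j) (t j / 3) \<inter> mball (z j') (t j' / 3) \<noteq> {}"
      then obtain u where u: "u \<in> M" "d (z j) u < t j / 3" "d (z j') u < t j' / 3" by auto
      have "d (z j) y \<le> d (z j) u + d u y" using triangle zM u(1) yM by blast
      moreover have "d u y \<le> d u (z j') + d (z j') y" using triangle zM u(1) yM by blast
      moreover have "d u (z j') = d (z j') u" using commute by auto
      ultimately show False using u tlt[OF that] tpos[of j] unfolding t_def by linarith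
    qed
    show "mball (fst (C k)) (snd (C k)) \<inter> mball (fst (C k')) (snd (C k')) = {}"
    proof (cases k)
      case 0
      then obtain j' where "k' = Suc j'" using kk by (cases k') auto
      then show ?thesis using disj0[of j'] 0 by (simp add: C0 CS)
    next
      case (Suc j)
      show ?thesis
      proof (cases k')
        case 0 then show ?thesis using disj0[of j] Suc by (simp add: C0 CS Int_commute)
      next
        case (Suc j')
        then have "j \<noteq> j'" using kk \<open>k = Suc j\<close> by simp
        then show ?thesis using disjS[of j j'] disjS[of j' j] Suc \<open>k = Suc j\<close>
          by (cases "j < j'") (simp_all add: CS Int_commute)
      qed
    qed
  qed
  then show ?thesis by blast
qed


definition child :: "'a \<Rightarrow> real \<Rightarrow> nat \<Rightarrow> 'a \<times> real" where
  "child p r = (SOME C. childP C p r)"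

lemma child: "p \<in> P \<Longrightarrow> r > 0 \<Longrightarrow> childP (child p r) p r"
  unfolding child_def using children_exist by (rule someI_ex)

definition idx :: "int \<Rightarrow> int \<Rightarrow> nat" where
  "idx a z = (if z = a then 0 else Suc (int_encode z))"

lemma idx_inj: "idx a z = idx a z' \<Longrightarrow> z = z'"
  unfolding idx_def using inj_int_encode[of UNIV] by (auto split: if_splits dest: injD)

primrec T :: "int list \<Rightarrow> 'a \<times> real" where
  "T [] = (p0, 1)"
| "T (z # s) = child (fst (T s)) (snd (T s)) (idx (dl s) z)"

definition Bl :: "int list \<Rightarrow> 'a set" where
  "Bl s = mball (fst (T s)) (snd (T s))"

lemma T_good: "fst (T s) \<in> P \<and> 0 < snd (T s) \<and> snd (T s) \<le> 1 / 2^length s"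
proof (induction s)
  case Nil then show ?case using p0 by simp
next
  case (Cons z s)
  then have c: "childP (child (fst (T s)) (snd (T s))) (fst (T s)) (snd (T s))" by (intro child) auto
  then have "fst (T (z#s)) \<in> P \<and> 0 < snd (T (z#s)) \<and> snd (T (z#s)) \<le> snd (T s) / 2"
    unfolding childP_def by simp
  moreover have "snd (T s) \<le> 1 / 2^length s" using Cons by simp
  ultimately have "snd (T (z#s)) \<le> (1 / 2^length s) / 2" by (meson divide_right_mono order_trans zero_le_numeral)
  then show ?case using \<open>fst (T (z#s)) \<in> P \<and> 0 < snd (T (z#s)) \<and> _\<close> by simp
qed

lemma T_sub: "Bl (z # s) \<subseteq> Bl s"
proof -
  have c: "childP (child (fst (T s)) (snd (T s))) (fst (T s)) (snd (T s))" using T_good by (intro child) auto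
  then show ?thesis unfolding childP_def Bl_def by simp
qed

lemma T_disj: "length s = length s' \<Longrightarrow> s \<noteq> s' \<Longrightarrow> Bl s \<inter> Bl s' = {}"
proof (induction s arbitrary: s')
  case Nil then show ?case by simp
next
  case (Cons z s)
  then obtain z' t' where s': "s' = z' # t'" by (cases s') auto
  show ?case
  proof (cases "s = t'")
    case True
    then have "z \<noteq> z'" using Cons s' by simp
    then have ne: "idx (dl s) z \<noteq> idx (dl s) z'" using idx_inj by blast
    have c: "childP (child (fst (T s)) (snd (T s))) (fst (T s)) (snd (T s))" using T_good by (intro child) auto
    then show ?thesis using ne unfolding childP_def Bl_def s' True[symmetric] by simp
  next
    case False
    then have "Bl s \<inter> Bl t' = {}" using Cons s' by simp
    then show ?thesis using T_sub[of z s] T_sub[of z' t'] s' by blast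
  qed
qed

lemma T_keep: "fst (T (dl s # s)) = fst (T s)"
proof -
  have c: "childP (child (fst (T s)) (snd (T s))) (fst (T s)) (snd (T s))" using T_good by (intro child) auto
  then show ?thesis unfolding childP_def by (simp add: idx_def)
qed

lemma nested: "m \<le> n \<Longrightarrow> Bl (qpath q n) \<subseteq> Bl (qpath q m)"
proof (induction n rule: dec_induct)
  case base then show ?case by simp
next
  case (step n) then show ?case using T_sub[of "Lq n q" "qpath q n"] by simp
qed

definition n0 :: "real \<Rightarrow> nat" where
  "n0 q = (SOME N. \<forall>n\<ge>N. mQ (qpath q n) = q)"

lemma n0: "q \<in> \<rat> \<Longrightarrow> n \<ge> n0 q \<Longrightarrow> mQ (qpath q n) = q"
proof -
  assume q: "q \<in> \<rat>" and n: "n \<ge> n0 q"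
  have "\<exists>N. \<forall>n\<ge>N. mQ (qpath q n) = q" using mQ_stable[OF q] by (simp add: eventually_sequentially)
  then have "\<forall>n\<ge>n0 q. mQ (qpath q n) = q" unfolding n0_def by (rule someI_ex)
  then show ?thesis using n by blast
qed

definition fq :: "real \<Rightarrow> 'a" where
  "fq q = fst (T (qpath q (n0 q)))"

lemma f_center: assumes q: "q \<in> \<rat>" and nn: "n \<ge> n0 q" shows "fst (T (qpath q n)) = fq q"
  using nn
proof (induction n rule: dec_induct)
  case base then show ?case by (simp add: fq_def)
next
  case (step n)
  have "dl (qpath q n) = Lq n q" using n0[OF q step(1)] by (simp add: dl_def)
  then have "fst (T (qpath q (Suc n))) = fst (T (qpath q n))"
    using T_keep[of "qpath q n"] by simp
  then show ?case using step by simp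
qed

lemma f_in: "q \<in> \<rat> \<Longrightarrow> fq q \<in> Bl (qpath q n)"
proof -
  assume q: "q \<in> \<rat>"
  let ?m = "max n (n0 q)"
  have "fst (T (qpath q ?m)) = fq q" using f_center[OF q] by simp
  moreover have "fst (T (qpath q ?m)) \<in> Bl (qpath q ?m)"
    using T_good[of "qpath q ?m"] PM unfolding Bl_def by auto
  moreover have "Bl (qpath q ?m) \<subseteq> Bl (qpath q n)" by (rule nested) simp
  ultimately show ?thesis by auto
qed

lemma f_P: "fq q \<in> P"
  unfolding fq_def using T_good by blast

lemma f_cont:
  assumes q: "q \<in> \<rat>" and e: "e > 0"
  shows "\<exists>\<delta>>0. \<forall>q'\<in>\<rat>. \<bar>q' - q\<bar> < \<delta> \<longrightarrow> d (fq q) (fq q') < e"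
proof -
  obtain n where n: "(1/2::real)^n < e/2" using real_arch_pow_inv[of "e/2" "1/2"] e by auto
  then have n': "2 * (1 / 2^n) < e" by (simp add: power_one_over)
  obtain \<delta> where \<delta>: "\<delta> > 0" "\<forall>q'. \<bar>q' - q\<bar> < \<delta> \<longrightarrow> qpath q' n = qpath q n"
    using qpath_stable[OF q] by blast
  show ?thesis
  proof (intro exI[of _ \<delta>] conjI ballI impI)
    show "\<delta> > 0" by fact
    fix q' assume q': "q' \<in> \<rat>" and "\<bar>q' - q\<bar> < \<delta>"
    then have pe: "qpath q' n = qpath q n" using \<delta> by blast
    let ?c = "fst (T (qpath q n))" and ?r = "snd (T (qpath q n))"
    have a: "fq q \<in> mball ?c ?r" using f_in[OF q, of n] by (simp add: Bl_def)
    have b: "fq q' \<in> mball ?c ?r" using f_in[OF q', of n] pe by (simp add: Bl_def)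
    have "?r \<le> 1/2^n" using T_good[of "qpath q n"] by simp
    moreover have "d (fq q) (fq q') \<le> d (fq q) ?c + d ?c (fq q')" using a b triangle by auto
    moreover have "d (fq q) ?c = d ?c (fq q)" by (rule commute)
    ultimately show "d (fq q) (fq q') < e" using a b n' by auto
  qed
qed

lemma f_invcont:
  assumes q: "q \<in> \<rat>" and e: "e > 0"
  shows "\<exists>\<delta>>0. \<forall>q'\<in>\<rat>. d (fq q) (fq q') < \<delta> \<longrightarrow> \<bar>q - q'\<bar> < e"
proof -
  obtain n where n: "(1/2::real)^n < e" using real_arch_pow_inv[of "e" "1/2"] e by auto
  then have n': "1 / 2^n < e" by (simp add: power_one_over)
  let ?c = "fst (T (qpath q (Suc n)))" and ?r = "snd (T (qpath q (Suc n)))"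
  have a: "fq q \<in> mball ?c ?r" using f_in[OF q, of "Suc n"] by (simp add: Bl_def)
  define \<delta> where "\<delta> = ?r - d ?c (fq q)"
  show ?thesis
  proof (intro exI[of _ \<delta>] conjI ballI impI)
    show "\<delta> > 0" using a by (simp add: \<delta>_def)
    fix q' assume q': "q' \<in> \<rat>" and dd: "d (fq q) (fq q') < \<delta>"
    have fM: "fq q' \<in> M" using f_P PM by auto
    have "d ?c (fq q') \<le> d ?c (fq q) + d (fq q) (fq q')" using a fM triangle by auto
    then have "fq q' \<in> Bl (qpath q (Suc n))" using a fM dd by (simp add: Bl_def \<delta>_def)
    moreover have "fq q' \<in> Bl (qpath q' (Suc n))" by (rule f_in[OF q'])
    ultimately have "qpath q' (Suc n) = qpath q (Suc n)" using T_disj[of "qpath q' (Suc n)" "qpath q (Suc n)"] by auto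
    then have "Lq n q = Lq n q'" by simp
    then have "\<bar>q - q'\<bar> < 1/2^n" by (rule Lq_close)
    then show "\<bar>q - q'\<bar> < e" using n' by simp
  qed
qed

lemma f_inj: "inj_on fq \<rat>"
proof (rule inj_onI)
  fix a b assume a: "a \<in> \<rat>" and b: "b \<in> \<rat>" and eq: "fq a = fq b"
  show "a = b"
  proof (rule ccontr)
    assume "a \<noteq> b"
    then have "\<bar>a - b\<bar> > 0" by simp
    then obtain \<delta> where "\<delta> > 0" "\<forall>q'\<in>\<rat>. d (fq a) (fq q') < \<delta> \<longrightarrow> \<bar>a - q'\<bar> < \<bar>a - b\<bar>"
      using f_invcont[OF a] by blast
    moreover have "d (fq a) (fq b) = 0" using eq f_P[of b] PM mdist_zero by (metis subsetD)
    ultimately show False using b by auto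
  qed
qed


theorem embed_Q: "\<exists>S\<subseteq>P. subtopology mtopology S homeomorphic_space top_of_set (\<rat>::real set)"
proof -
  define S where "S = fq ` \<rat>"
  define g where "g = inv_into \<rat> fq"
  have SP: "S \<subseteq> P" using f_P S_def by auto
  have SM: "S \<subseteq> M" using SP PM by auto
  have MS: "Metric_space S d" using SM by (rule subspace)
  have MQ: "Metric_space (\<rat>::real set) dist" by (rule Met_TC.subspace) simp
  have sub1: "Metric_space.mtopology S d = subtopology mtopology S"
    using Submetric.mtopology_submetric[of M d S] SM Metric_space_axioms
    by (simp add: Submetric_def Submetric_axioms_def)
  have sub2: "Metric_space.mtopology (\<rat>::real set) dist = top_of_set \<rat>"
    using Submetric.mtopology_submetric[of UNIV dist "\<rat>::real set"] Met_TC.Metric_space_axioms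
    by (simp add: Submetric_def Submetric_axioms_def)
  have gf: "g (fq q) = q" if "q \<in> \<rat>" for q unfolding g_def using f_inj that by simp
  have c1: "continuous_map (Metric_space.mtopology (\<rat>::real set) dist) (Metric_space.mtopology S d) fq"
    unfolding Metric_space.metric_continuous_map[OF MQ MS]
  proof (intro conjI ballI allI impI)
    show "fq ` \<rat> \<subseteq> S" by (simp add: S_def)
    fix a :: real and e :: real assume a: "a \<in> \<rat>" and e: "e > 0"
    obtain \<delta> where "\<delta> > 0" "\<forall>q'\<in>\<rat>. \<bar>q' - a\<bar> < \<delta> \<longrightarrow> d (fq a) (fq q') < e"
      using f_cont[OF a e] by blast
    then show "\<exists>\<delta>>0. \<forall>x. x \<in> \<rat> \<and> dist a x < \<delta> \<longrightarrow> d (fq a) (fq x) < e"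
      by (metis dist_real_def abs_minus_commute)
  qed
  have c2: "continuous_map (Metric_space.mtopology S d) (Metric_space.mtopology (\<rat>::real set) dist) g"
    unfolding Metric_space.metric_continuous_map[OF MS MQ]
  proof (intro conjI ballI allI impI)
    show "g ` S \<subseteq> \<rat>" using gf by (auto simp: S_def)
    fix a e assume a: "a \<in> S" and e: "(e::real) > 0"
    then obtain q where q: "q \<in> \<rat>" "a = fq q" by (auto simp: S_def)
    obtain \<delta> where \<delta>: "\<delta> > 0" "\<forall>q'\<in>\<rat>. d (fq q) (fq q') < \<delta> \<longrightarrow> \<bar>q - q'\<bar> < e"
      using f_invcont[OF q(1) e] by blast
    show "\<exists>\<delta>>0. \<forall>x. x \<in> S \<and> d a x < \<delta> \<longrightarrow> dist (g a) (g x) < e"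
    proof (intro exI[of _ \<delta>] conjI allI impI)
      show "\<delta> > 0" by fact
      fix x assume x: "x \<in> S \<and> d a x < \<delta>"
      then obtain q' where q': "q' \<in> \<rat>" "x = fq q'" by (auto simp: S_def)
      show "dist (g a) (g x) < e" using \<delta> q q' x gf by (simp add: dist_real_def)
    qed
  qed
  have "homeomorphic_maps (Metric_space.mtopology S d) (Metric_space.mtopology (\<rat>::real set) dist) g fq"
    unfolding homeomorphic_maps_def
    using c1 c2 gf MS MQ by (auto simp: Metric_space.topspace_mtopology S_def)
  then have "Metric_space.mtopology S d homeomorphic_space Metric_space.mtopology (\<rat>::real set) dist"
    by (rule homeomorphic_maps_imp_homeomorphic_space)
  then show ?thesis using SP sub1 sub2 by auto
qed

end


lemma arch1: assumes e: "(e::real) > 0" shows "\<exists>j::nat. 1 / (real j + 1) < e"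
proof -
  obtain j :: nat where "1/e < real j" using reals_Archimedean2 by blast
  then have "1 < e * real j" using e by (simp add: field_simps)
  then have "1 < e * (real j + 1)" using e by (simp add: algebra_simps)
  then have "1 / (real j + 1) < e" by (simp add: divide_less_eq mult.commute)
  then show ?thesis by blast
qed

lemma rat_no_isolated: assumes a: "(a::real) \<in> \<rat>" shows "\<not> openin (top_of_set \<rat>) {a}"
proof
  assume "openin (top_of_set \<rat>) {a}"
  then obtain U where U: "open U" "{a} = \<rat> \<inter> U" by (auto simp: openin_open)
  then have "a \<in> U" by auto
  then obtain e where e: "e > 0" "ball a e \<subseteq> U" using U(1) open_contains_ball by blast
  obtain r where r: "r \<in> \<rat>" "a < r" "r < a + e" using Rats_dense_in_real[of a "a + e"] e by auto
  then have "r \<in> ball a e" by (simp add: dist_real_def)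
  then have "r \<in> \<rat> \<inter> U" using r e by auto
  then show False using U(2) r by auto
qed

context
  fixes X :: "'a topology" and x :: "nat \<Rightarrow> 'a" and d :: "'a \<Rightarrow> 'a \<Rightarrow> real"
  assumes inj: "inj x"
    and metric: "Metric_space (range x) d"
    and compat: "Metric_space.mtopology (range x) d = subtopology X (range x)"
begin

lemma sub_eq: "S \<subseteq> range x \<Longrightarrow> subtopology X S = subtopology (Metric_space.mtopology (range x) d) S"
  using compat subtopology_subtopology[of X "range x" S] by (simp add: Int_absorb1)

lemma perf_to_plus:
  assumes B: "B \<noteq> {}" and dense: "\<forall>i\<in>B. \<forall>j. \<exists>n\<in>B \<inter> ballA d x i j. n \<noteq> i"
  shows "\<exists>B'\<subseteq>B. subtopology X (x ` B') homeomorphic_space top_of_set (\<rat>::real set)"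
proof -
  obtain i0 where i0: "i0 \<in> B" using B by blast
  interpret perfset "range x" d "x ` B" "x i0"
  proof (rule perfset.intro[OF metric], unfold_locales)
    show "x ` B \<subseteq> range x" by auto
    show "x i0 \<in> x ` B" using i0 by auto
    fix p e assume p: "p \<in> x ` B" and e: "(e::real) > 0"
    then obtain i where i: "i \<in> B" "p = x i" by auto
    obtain j where j: "1 / (real j + 1) < e" using arch1[OF e] by blast
    obtain n where n: "n \<in> B" "d (x n) (x i) < 1 / (real j + 1)" "n \<noteq> i"
      using dense i unfolding ballA_def by blast
    have "x n \<noteq> x i" using n inj by (auto dest: injD)
    then show "\<exists>q\<in>x ` B. q \<noteq> p \<and> d q p < e" using n i j by force
  qed
  obtain S where S: "S \<subseteq> x ` B" "subtopology (Metric_space.mtopology (range x) d) S homeomorphic_space top_of_set (\<rat>::real set)"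
    using embed_Q by blast
  define B' where "B' = {n\<in>B. x n \<in> S}"
  have "x ` B' = S" using S(1) by (auto simp: B'_def)
  moreover have "S \<subseteq> range x" using S(1) by auto
  ultimately show ?thesis using S(2) sub_eq[of S] by (intro exI[of _ B']) (auto simp: B'_def)
qed

lemma plus_to_perf:
  assumes H: "subtopology X (x ` B) homeomorphic_space top_of_set (\<rat>::real set)"
  shows "B \<noteq> {} \<and> (\<forall>i\<in>B. \<forall>j. \<exists>n\<in>B \<inter> ballA d x i j. n \<noteq> i)"
proof
  interpret Metric_space "range x" d by (rule metric)
  have H': "subtopology mtopology (x ` B) homeomorphic_space top_of_set (\<rat>::real set)"
    using H sub_eq[of "x ` B"] by (metis image_subsetI rangeI)
  show "B \<noteq> {}"
  proof
    assume "B = {}"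
    then have "subtopology mtopology (x ` B) = trivial_topology" by simp
    then have "top_of_set (\<rat>::real set) = trivial_topology" using homeomorphic_empty_space[OF H'] by simp
    then have "topspace (top_of_set (\<rat>::real set)) = {}" by simp
    then show False using Rats_0 by auto
  qed
  show "\<forall>i\<in>B. \<forall>j. \<exists>n\<in>B \<inter> ballA d x i j. n \<noteq> i"
  proof (rule ccontr)
    assume "\<not> ?thesis"
    then obtain i j where i: "i \<in> B" and iso: "\<forall>n\<in>B. d (x n) (x i) < 1 / (real j + 1) \<longrightarrow> n = i"
      by (auto simp: ballA_def)
    have eq: "x ` B \<inter> mball (x i) (1 / (real j + 1)) = {x i}"
    proof
      show "x ` B \<inter> mball (x i) (1 / (real j + 1)) \<subseteq> {x i}"
        using iso commute by auto
      show "{x i} \<subseteq> x ` B \<inter> mball (x i) (1 / (real j + 1))"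
        using i by auto
    qed
    have op: "openin (subtopology mtopology (x ` B)) {x i}"
      using openin_subtopology_Int2[OF openin_mball[of "x i" "1 / (real j + 1)"], of "x ` B"] eq by simp
    obtain h where h: "homeomorphic_map (subtopology mtopology (x ` B)) (top_of_set (\<rat>::real set)) h"
      using H' homeomorphic_space by blast
    have xi: "{x i} \<subseteq> topspace (subtopology mtopology (x ` B))" using i by auto
    have "openin (top_of_set \<rat>) (h ` {x i})"
      using homeomorphic_map_openness[OF h xi] op by simp
    moreover have "h (x i) \<in> \<rat>"
    proof -
      have "continuous_map (subtopology mtopology (x ` B)) (top_of_set (\<rat>::real set)) h"
        by (rule homeomorphic_imp_continuous_map[OF h])
      then have "h (x i) \<in> topspace (top_of_set (\<rat>::real set))"
        using xi continuous_map_image_subset_topspace by blast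
      then show ?thesis by simp
    qed
    ultimately show False using rat_no_isolated by simp
  qed
qed

end


lemma plus_iff: "A \<in> scat_plus X x \<longleftrightarrow>
   (\<exists>B\<subseteq>A. subtopology X (x ` B) homeomorphic_space top_of_set (\<rat> :: real set))"
  by (simp add: scat_plus_def scat_ideal_def scattered_idx_def)

theorem mainTheorem1:
  fixes X :: "'a topology" and x :: "nat \<Rightarrow> 'a" and d :: "'a \<Rightarrow> 'a \<Rightarrow> real"
  assumes inj: "inj x"
    and inX: "range x \<subseteq> topspace X"
    and homQ: "subtopology X (range x) homeomorphic_space top_of_set (\<rat> :: real set)"
    and metric: "Metric_space (range x) d"
    and compat: "Metric_space.mtopology (range x) d = subtopology X (range x)"
  shows "(\<forall>A. A \<in> scat_plus X x \<longleftrightarrow>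
            (\<exists>B. B \<noteq> {} \<and> B \<subseteq> A \<and>
                 (\<forall>i\<in>B. \<forall>j. \<exists>n\<in>B \<inter> ballA d x i j. n \<noteq> i)))
       \<and> (\<forall>A\<in>scat_plus X x. \<exists>B. B \<subseteq> A \<and> B \<in> scat_plus X x \<and>
            (\<forall>i\<in>B. \<forall>j. B \<inter> ballA d x i j \<in> scat_plus X x))"
proof -
  interpret Metric_space "range x" d by (rule metric)
  have P1: "A \<in> scat_plus X x \<longleftrightarrow>
            (\<exists>B. B \<noteq> {} \<and> B \<subseteq> A \<and> (\<forall>i\<in>B. \<forall>j. \<exists>n\<in>B \<inter> ballA d x i j. n \<noteq> i))" for A
  proof
    assume "A \<in> scat_plus X x"
    then obtain B where B: "B \<subseteq> A" "subtopology X (x ` B) homeomorphic_space top_of_set (\<rat> :: real set)"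
      unfolding plus_iff by blast
    have "B \<noteq> {} \<and> (\<forall>i\<in>B. \<forall>j. \<exists>n\<in>B \<inter> ballA d x i j. n \<noteq> i)"
      by (rule plus_to_perf[OF inj metric compat B(2)])
    then show "\<exists>B. B \<noteq> {} \<and> B \<subseteq> A \<and> (\<forall>i\<in>B. \<forall>j. \<exists>n\<in>B \<inter> ballA d x i j. n \<noteq> i)"
      using B(1) by blast
  next
    assume "\<exists>B. B \<noteq> {} \<and> B \<subseteq> A \<and> (\<forall>i\<in>B. \<forall>j. \<exists>n\<in>B \<inter> ballA d x i j. n \<noteq> i)"
    then obtain B where B: "B \<noteq> {}" "B \<subseteq> A" "\<forall>i\<in>B. \<forall>j. \<exists>n\<in>B \<inter> ballA d x i j. n \<noteq> i" by blast
    obtain B' where "B' \<subseteq> B" "subtopology X (x ` B') homeomorphic_space top_of_set (\<rat> :: real set)"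
      using perf_to_plus[OF inj metric compat B(1) B(3)] by blast
    then have "B' \<subseteq> A \<and> subtopology X (x ` B') homeomorphic_space top_of_set (\<rat> :: real set)"
      using B(2) by blast
    then show "A \<in> scat_plus X x" unfolding plus_iff by blast
  qed
  have P2: "\<exists>B. B \<subseteq> A \<and> B \<in> scat_plus X x \<and> (\<forall>i\<in>B. \<forall>j. B \<inter> ballA d x i j \<in> scat_plus X x)"
    if A: "A \<in> scat_plus X x" for A
  proof -
    obtain B where B: "B \<subseteq> A" "subtopology X (x ` B) homeomorphic_space top_of_set (\<rat> :: real set)"
      using A unfolding plus_iff by blast
    have Bp: "B \<in> scat_plus X x" unfolding plus_iff using B(2) by blast
    have dense: "\<forall>i\<in>B. \<forall>j. \<exists>n\<in>B \<inter> ballA d x i j. n \<noteq> i"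
      using plus_to_perf[OF inj metric compat B(2)] by (rule conjunct2)
    have "B \<inter> ballA d x i j \<in> scat_plus X x" if i: "i \<in> B" for i j
    proof -
      let ?C = "B \<inter> ballA d x i j"
      have "i \<in> ?C" using i by (simp add: ballA_def)
      then have ne: "?C \<noteq> {}" by blast
      have "\<forall>i'\<in>?C. \<forall>j'. \<exists>n\<in>?C \<inter> ballA d x i' j'. n \<noteq> i'"
      proof (intro ballI allI)
        fix i' j' assume i': "i' \<in> ?C"
        define \<rho> where "\<rho> = 1 / (real j + 1) - d (x i') (x i)"
        have rho: "\<rho> > 0" using i' by (simp add: ballA_def \<rho>_def)
        obtain j'' where j'': "1 / (real j'' + 1) < min \<rho> (1 / (real j' + 1))"
          using arch1[of "min \<rho> (1 / (real j' + 1))"] rho by auto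
        have i'B: "i' \<in> B" using i' by blast
        have "\<exists>n\<in>B \<inter> ballA d x i' j''. n \<noteq> i'" using dense i'B by blast
        then obtain n where n: "n \<in> B" "d (x n) (x i') < 1 / (real j'' + 1)" "n \<noteq> i'"
          unfolding ballA_def by blast
        have "d (x n) (x i) \<le> d (x n) (x i') + d (x i') (x i)" by (rule triangle) auto
        then have "d (x n) (x i) < 1 / (real j + 1)" using n(2) j'' \<rho>_def by linarith
        moreover have "d (x n) (x i') < 1 / (real j' + 1)" using n(2) j'' by linarith
        ultimately show "\<exists>n\<in>?C \<inter> ballA d x i' j'. n \<noteq> i'" using n by (auto simp: ballA_def)
      qed
      then have "?C \<noteq> {} \<and> ?C \<subseteq> ?C \<and> (\<forall>i\<in>?C. \<forall>j. \<exists>n\<in>?C \<inter> ballA d x i j. n \<noteq> i)"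
        using ne by (intro conjI subset_refl)
      then have "\<exists>B. B \<noteq> {} \<and> B \<subseteq> ?C \<and> (\<forall>i\<in>B. \<forall>j. \<exists>n\<in>B \<inter> ballA d x i j. n \<noteq> i)"
        by (rule exI)
      then show ?thesis using P1[of ?C] by (rule iffD2[rotated])
    qed
    then show ?thesis using B(1) Bp by (intro exI[of _ B] conjI ballI allI)
  qed
  show ?thesis
  proof (intro conjI allI ballI)
    fix A show "A \<in> scat_plus X x \<longleftrightarrow>
            (\<exists>B. B \<noteq> {} \<and> B \<subseteq> A \<and> (\<forall>i\<in>B. \<forall>j. \<exists>n\<in>B \<inter> ballA d x i j. n \<noteq> i))"
      by (rule P1)
  next
    fix A assume "A \<in> scat_plus X x"
    then show "\<exists>B. B \<subseteq> A \<and> B \<in> scat_plus X x \<and> (\<forall>i\<in>B. \<forall>j. B \<inter> ballA d x i j \<in> scat_plus X x)"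
      by (rule P2)
  qed
qed


end
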